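(* Let $\mathbf{P}=(X,P)$ be a finite interval order, and let $\mathbf{I}$ be a distinguishing interval representation of $\mathbf{P}$ in which every interval has length $1$ except for one interval, whose length is between $0$ and $2$ inclusive. Then $\dim(\mathbf{P})\le 3$.
   Context: An interval representation of a poset $(X,P)$ assigns to each $x\in X$ a closed real interval $[l_x,r_x]$ such that $x<y$ in $P$ iff $r_x<l_y$; the length is $r_x-l_x$. A representation is distinguishing if no two intervals share an endpoint. The dimension $\dim(\mathbf{P})$ is the minimum number of linear extensions of $P$ whose intersection is $P$. *)

theory Defs
  imports Complex_Main
begin

definition strict_poset :: "'a set \<Rightarrow> ('a \<times> 'a) set \<Rightarrow> bool" where
  "strict_poset X P \<longleftrightarrow> P \<subseteq> X \<times> X \<and> (\<forall>x\<in>X. (x, x) \<notin> P) \<and>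
     (\<forall>x\<in>X. \<forall>y\<in>X. \<forall>z\<in>X. (x, y) \<in> P \<longrightarrow> (y, z) \<in> P \<longrightarrow> (x, z) \<in> P)"

definition linear_extension :: "'a set \<Rightarrow> ('a \<times> 'a) set \<Rightarrow> ('a \<times> 'a) set \<Rightarrow> bool" where
  "linear_extension X P L \<longleftrightarrow> strict_poset X L \<and> P \<subseteq> L \<and>
     (\<forall>x\<in>X. \<forall>y\<in>X. x \<noteq> y \<longrightarrow> (x, y) \<in> L \<or> (y, x) \<in> L)"

definition realizer :: "'a set \<Rightarrow> ('a \<times> 'a) set \<Rightarrow> ('a \<times> 'a) set set \<Rightarrow> bool" where
  "realizer X P R \<longleftrightarrow> finite R \<and> R \<noteq> {} \<and> (\<forall>L\<in>R. linear_extension X P L) \<and> \<Inter> R = P"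

definition poset_dim :: "'a set \<Rightarrow> ('a \<times> 'a) set \<Rightarrow> nat" where
  "poset_dim X P = (LEAST t. \<exists>R. realizer X P R \<and> card R = t)"

definition interval_rep :: "'a set \<Rightarrow> ('a \<times> 'a) set \<Rightarrow> ('a \<Rightarrow> real) \<Rightarrow> ('a \<Rightarrow> real) \<Rightarrow> bool" where
  "interval_rep X P l r \<longleftrightarrow> (\<forall>x\<in>X. l x \<le> r x) \<and>
     (\<forall>x\<in>X. \<forall>y\<in>X. (x, y) \<in> P \<longleftrightarrow> r x < l y)"

definition distinguishing :: "'a set \<Rightarrow> ('a \<Rightarrow> real) \<Rightarrow> ('a \<Rightarrow> real) \<Rightarrow> bool" where
  "distinguishing X l r \<longleftrightarrow> (\<forall>x\<in>X. \<forall>y\<in>X. x \<noteq> y \<longrightarrow> {l x, r x} \<inter> {l y, r y} = {})"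

end

theory Submission
  imports Defs
begin

lemma key_ext:
  fixes g :: "'a \<Rightarrow> real"
  assumes "P \<subseteq> X \<times> X" "inj_on g X" "\<And>x y. x\<in>X \<Longrightarrow> y\<in>X \<Longrightarrow> (x,y)\<in>P \<Longrightarrow> g x < g y"
  shows "linear_extension X P {(x,y). x\<in>X \<and> y\<in>X \<and> g x < g y}"
  using assms unfolding linear_extension_def strict_poset_def inj_on_def
  by (auto) (meson linorder_cases)

lemma int_lt_real: "(i::int) < j \<Longrightarrow> real_of_int i + 1 \<le> real_of_int j"
proof -
  assume "i < j"
  then have "i + 1 \<le> j" by simp
  then have "real_of_int (i+1) \<le> real_of_int j" by (simp only: of_int_le_iff)
  then show ?thesis by simp
qed

lemma int_le_real: "(i::int) \<le> j \<Longrightarrow> real_of_int i \<le> real_of_int j"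
  by simp

theorem theorem7p1:
  fixes X :: "'a set" and P :: "('a \<times> 'a) set" and l r :: "'a \<Rightarrow> real" and z :: 'a
  assumes "finite X"
    and "strict_poset X P"
    and "interval_rep X P l r"
    and "distinguishing X l r"
    and "z \<in> X" and "0 \<le> r z - l z" and "r z - l z \<le> 2"
    and "\<forall>x\<in>X. x \<noteq> z \<longrightarrow> r x - l x = 1"
  shows "poset_dim X P \<le> 3"
proof -
  from assms(2) have Psub: "P \<subseteq> X \<times> X" and irr: "\<And>x. x\<in>X \<Longrightarrow> (x,x)\<notin>P"
    by (auto simp: strict_poset_def)
  have lr: "\<And>x. x\<in>X \<Longrightarrow> l x \<le> r x" using assms(3) by (auto simp: interval_rep_def)
  have Piff: "\<And>x y. x\<in>X \<Longrightarrow> y\<in>X \<Longrightarrow> (x,y)\<in>P \<longleftrightarrow> r x < l y"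
    using assms(3) by (auto simp: interval_rep_def)
  have dist: "l x \<noteq> l y \<and> l x \<noteq> r y \<and> r x \<noteq> l y \<and> r x \<noteq> r y"
    if "x\<in>X" "y\<in>X" "x\<noteq>y" for x y
  proof -
    have "{l x, r x} \<inter> {l y, r y} = {}" using assms(4) that by (simp add: distinguishing_def)
    then show ?thesis by auto
  qed
  have unit: "\<And>x. x\<in>X \<Longrightarrow> x\<noteq>z \<Longrightarrow> r x = l x + 1" using assms(8) by force
  define b where "b u = floor (l u - r z)" for u
  have bl: "real_of_int (b u) \<le> l u - r z" for u unfolding b_def by (rule of_int_floor_le)
  have bu: "l u - r z < real_of_int (b u) + 1" for u unfolding b_def by (rule real_of_int_floor_add_one_gt)
  define kA where "kA u = (if u = z then -3/2 else 3 * real_of_int (b u) - (l u - r z))" for u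
  define fA where "fA u = (if u = z then l z else if even (b u) then r u else l u)" for u
  define fB where "fB u = (if u = z then l z else if even (b u) then l u else r u)" for u
  have kAr: "2 * real_of_int (b u) - 1 < kA u \<and> kA u \<le> 2 * real_of_int (b u)" if "u \<noteq> z" for u
    using bl[of u] bu[of u] that unfolding kA_def by auto
  have endp: "inj_on g X \<and> (\<forall>x\<in>X. \<forall>y\<in>X. (x,y)\<in>P \<longrightarrow> g x < g y)"
    if g: "\<And>u. g u = l u \<or> g u = r u" for g
  proof
    show "inj_on g X"
    proof (rule inj_onI, rule ccontr)
      fix x y assume "x\<in>X" "y\<in>X" "g x = g y" "x \<noteq> y"
      then show False using dist[of x y] g[of x] g[of y] by metis
    qed
    show "\<forall>x\<in>X. \<forall>y\<in>X. (x,y)\<in>P \<longrightarrow> g x < g y"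
    proof (intro ballI impI)
      fix x y assume "x\<in>X" "y\<in>X" "(x,y)\<in>P"
      then have "r x < l y" using Piff by auto
      moreover have "l x \<le> g x" "g x \<le> r x" using g[of x] lr[OF \<open>x\<in>X\<close>] by auto
      moreover have "l y \<le> g y" "g y \<le> r y" using g[of y] lr[OF \<open>y\<in>X\<close>] by auto
      ultimately show "g x < g y" by linarith
    qed
  qed
  have fAe: "fA u = l u \<or> fA u = r u" for u unfolding fA_def by auto
  have fBe: "fB u = l u \<or> fB u = r u" for u unfolding fB_def by auto
  have kA_inj: "inj_on kA X"
  proof (rule inj_onI, rule ccontr)
    fix x y assume xy: "x\<in>X" "y\<in>X" "kA x = kA y" "x \<noteq> y"
    show False
    proof (cases "x = z \<or> y = z")
      case True
      then obtain u where u: "u \<noteq> z" "kA u = -3/2" using xy unfolding kA_def by (auto split: if_splits)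
      have "b u \<ge> 0 \<or> b u \<le> -1" by auto
      then show False
      proof
        assume "b u \<ge> 0" then have "real_of_int (b u) \<ge> 0" by simp
        then show False using kAr[OF u(1)] u(2) by linarith
      next
        assume "b u \<le> -1" then have "real_of_int (b u) \<le> -1" by simp
        then show False using kAr[OF u(1)] u(2) by linarith
      qed
    next
      case False
      have "b x < b y \<or> b y < b x \<or> b x = b y" by auto
      then show False
      proof (elim disjE)
        assume h: "b x < b y" then show False using int_lt_real[OF h] kAr[of x] kAr[of y] False xy by auto
      next
        assume h: "b y < b x" then show False using int_lt_real[OF h] kAr[of x] kAr[of y] False xy by auto
      next
        assume "b x = b y" then have "l x = l y" using xy False unfolding kA_def by auto
        then show False using dist[of x y] xy by auto
      qed
    qed
  qed
  have kA_mono: "kA x < kA y" if xy: "x\<in>X" "y\<in>X" "(x,y)\<in>P" for x y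
  proof -
    have rl: "r x < l y" using Piff xy by auto
    have ne: "x \<noteq> y" using irr xy by auto
    show ?thesis
    proof (cases "x = z")
      case True
      then have yz: "y \<noteq> z" using ne by auto
      have kz: "kA x = -3/2" using True unfolding kA_def by simp
      have "b y \<ge> 0 \<or> b y \<le> -1" by auto
      then show ?thesis
      proof
        assume "b y \<ge> 0" then have "real_of_int (b y) \<ge> 0" by simp
        then show ?thesis using kAr[OF yz] kz by linarith
      next
        assume "b y \<le> -1" then have "real_of_int (b y) \<le> -1" by simp
        moreover have "r z < l y" using rl True by simp
        ultimately show ?thesis using bu[of y] by linarith
      qed
    next
      case False
      note xz = False
      show ?thesis
      proof (cases "y = z")
        case True
        have kz: "kA y = -3/2" using True unfolding kA_def by simp
        have "b x \<ge> -1 \<or> b x \<le> -2" by auto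
        then show ?thesis
        proof
          assume "b x \<ge> -1" then have "real_of_int (b x) \<ge> -1" by simp
          moreover have "r x < l z" "l z \<le> r z" using rl True lr[OF xy(2)] by simp_all
          ultimately show ?thesis using bl[of x] unit[OF xy(1) xz] by linarith
        next
          assume "b x \<le> -2" then have "real_of_int (b x) \<le> -2" by simp
          then show ?thesis using kAr[OF xz] kz by linarith
        qed
      next
        case False
        have "b x < b y \<or> b y \<le> b x" by auto
        then show ?thesis
        proof
          assume h: "b x < b y" then show ?thesis using int_lt_real[OF h] kAr[OF xz] kAr[OF False] by auto
        next
          assume h: "b y \<le> b x" then show ?thesis using int_le_real[OF h] bl[of x] bu[of y]
              unit[OF xy(1) xz] unit[OF xy(2) False] rl by auto
        qed
      qed
    qed
  qed
  have rev: "kA y < kA x \<or> fA y < fA x \<or> fB y < fB x"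
    if xy: "x\<in>X" "y\<in>X" "x \<noteq> y" "(x,y)\<notin>P" "(y,x)\<notin>P" for x y
  proof -
    have i1: "l y < r x" using Piff[OF xy(1,2)] xy dist[OF xy(1,2,3)] by auto
    have i2: "l x < r y" using Piff[OF xy(2,1)] xy dist[OF xy(1,2,3)] by auto
    show ?thesis
    proof (cases "x = z")
      case True
      then have yz: "y \<noteq> z" using xy by auto
      have kz: "kA x = -3/2" using True unfolding kA_def by simp
      have "b y \<ge> 0 \<or> b y \<le> -1" by auto
      then have "kA y < kA x"
      proof
        assume "b y \<ge> 0" then have "real_of_int (b y) \<ge> 0" by simp
        moreover have "l y < r z" using i1 True by simp
        ultimately show ?thesis using bl[of y] by linarith
      next
        assume "b y \<le> -1" then have "real_of_int (b y) \<le> -1" by simp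
        then show ?thesis using kAr[OF yz] kz by linarith
      qed
      then show ?thesis by simp
    next
      case False
      note xz = False
      show ?thesis
      proof (cases "y = z")
        case True
        then show ?thesis using i1 i2 xz unfolding fA_def fB_def by auto
      next
        case False
        note yz = False
        have ux: "r x = l x + 1" using unit xy xz by auto
        have uy: "r y = l y + 1" using unit xy yz by auto
        have "b x = b y \<or> b y = b x + 1 \<or> b x = b y + 1 \<or> b x + 2 \<le> b y \<or> b y + 2 \<le> b x" by auto
        then show ?thesis
        proof (elim disjE)
          assume e: "b x = b y"
          show ?thesis
          proof (cases "l x < l y")
            case True
            then have "kA y < kA x" using e xz yz unfolding kA_def by auto
            then show ?thesis by simp
          next
            case False
            then have "l y < l x" using dist[OF xy(1,2,3)] by auto
            then have "fA y < fA x" using e xz yz ux uy unfolding fA_def by auto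
            then show ?thesis by simp
          qed
        next
          assume e: "b y = b x + 1"
          show ?thesis
          proof (cases "even (b x)")
            case True
            then have "fA y < fA x" using e xz yz i1 unfolding fA_def by auto
            then show ?thesis by simp
          next
            case False
            then have "fB y < fB x" using e xz yz i1 unfolding fB_def by auto
            then show ?thesis by simp
          qed
        next
          assume e: "b x = b y + 1"
          then have h: "b y < b x" by simp
          then have "kA y < kA x" using int_lt_real[OF h] kAr[OF xz] kAr[OF yz] by auto
          then show ?thesis by simp
        next
          assume e: "b x + 2 \<le> b y"
          then have "real_of_int (b x) + 2 \<le> real_of_int (b y)"
            using int_le_real[OF e] by simp
          then show ?thesis using bl[of y] bu[of x] i1 ux by linarith
        next
          assume e: "b y + 2 \<le> b x"
          then have "real_of_int (b y) + 2 \<le> real_of_int (b x)"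
            using int_le_real[OF e] by simp
          then show ?thesis using bl[of x] bu[of y] i2 uy by linarith
        qed
      qed
    qed
  qed
  define L where "L g = {(x,y). x\<in>X \<and> y\<in>X \<and> (g::'a\<Rightarrow>real) x < g y}" for g
  define R where "R = {L kA, L fA, L fB}"
  have extA: "linear_extension X P (L kA)" unfolding L_def
    by (rule key_ext[OF Psub kA_inj kA_mono])
  have extfA: "linear_extension X P (L fA)" unfolding L_def
    using key_ext[OF Psub] endp[OF fAe] by blast
  have extfB: "linear_extension X P (L fB)" unfolding L_def
    using key_ext[OF Psub] endp[OF fBe] by blast
  have PL: "P \<subseteq> L g" if "linear_extension X P (L g)" for g
    using that unfolding linear_extension_def by blast
  have "\<Inter> R = P"
  proof
    show "P \<subseteq> \<Inter> R" unfolding R_def using PL extA extfA extfB by auto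
    show "\<Inter> R \<subseteq> P"
    proof
      fix p assume p: "p \<in> \<Inter> R"
      obtain x y where pxy: "p = (x,y)" by fastforce
      have h: "x\<in>X" "y\<in>X" "kA x < kA y" "fA x < fA y" "fB x < fB y"
        using p unfolding R_def L_def pxy by auto
      show "p \<in> P"
      proof (rule ccontr)
        assume np: "p \<notin> P"
        have "x \<noteq> y" using h by auto
        moreover have "(y,x) \<notin> P"
        proof
          assume "(y,x) \<in> P"
          then have "kA y < kA x" using kA_mono h by auto
          then show False using h by auto
        qed
        ultimately show False using rev[of x y] h np pxy by auto
      qed
    qed
  qed
  then have real: "realizer X P R" unfolding realizer_def R_def
    using extA extfA extfB by auto
  have cR: "card R \<le> 3" unfolding R_def by (auto simp: card_insert_if)
  have "poset_dim X P \<le> card R" unfolding poset_dim_def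
    by (rule Least_le) (use real in blast)
  then show ?thesis using cR by linarith
qed

end
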